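(* Let $m\in\mathbb Z$, $\delta>0$, $C>0$. For all $N\ge1$ and $z$ with $\mathrm{Re}(z)\le-\delta$, $|z|\le C$, $$\frac{e^{z/N}}{(e^{z/N}-1)^{m+1}(e^{z/N})_N}\ll N^{m+1}\exp\big(N\,\mathrm{Re}(p(z))\big),$$ with implied constant depending only on $m,\delta,C$.
   Context: $(q)_N:=(1-q)(1-q^2)\cdots(1-q^N)$. $p(z):=\dfrac{\mathrm{Li}_2(e^{z})-\mathrm{Li}_2(1)}{z}$, where $\mathrm{Li}_2(w)=\sum_{n\ge1}w^n/n^2$ for $|w|\le1$ and $\mathrm{Li}_2(1)=\pi^2/6$. *)

theory Defs
  imports "HOL-Analysis.Analysis"
begin

definition qpoch :: "complex \<Rightarrow> nat \<Rightarrow> complex" where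
  "qpoch q N = (\<Prod>k=1..N. 1 - q ^ k)"

definition Li2 :: "complex \<Rightarrow> complex" where
  "Li2 w = (\<Sum>n. w ^ (Suc n) / of_nat (Suc n) ^ 2)"

definition pfun :: "complex \<Rightarrow> complex" where
  "pfun z = (Li2 (exp z) - of_real (pi ^ 2 / 6)) / z"

end

theory Submission
  imports Defs "HOL-Real_Asymp.Real_Asymp"
begin


lemma exp_cubic:
  fixes z :: complex
  assumes "norm z \<le> 1/2"
  shows "norm (exp z - 1 - z - z^2/2) \<le> norm z ^ 3 / 3"
proof -
  have sums: "(\<lambda>k. z ^ (k + 3) /\<^sub>R fact (k + 3)) sums (exp z - (\<Sum>k<3. z ^ k /\<^sub>R fact k))"
    by (intro sums_split_initial_segment exp_converges)
  have eq3: "(\<Sum>k<3. z ^ k /\<^sub>R fact k) = 1 + z + z^2/2"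
    by (simp add: eval_nat_numeral scaleR_conv_of_real)
  have sn: "summable (\<lambda>k. norm (z ^ (k + 3) /\<^sub>R fact (k + 3)))"
    using summable_norm_exp[of z]
    by (intro summable_norm summable_ignore_initial_segment)
       (auto simp: norm_power norm_divide divide_simps)
  have sg: "(\<lambda>k. norm z ^ 3 * (norm z ^ k / 6)) sums (norm z ^ 3 * (1 / (1 - norm z) / 6))"
    using assms by (intro sums_mult geometric_sums sums_divide) auto
  have "(\<Sum>k. z ^ (k + 3) /\<^sub>R fact (k + 3)) = exp z - (\<Sum>k<3. z ^ k /\<^sub>R fact k)"
    using sums by (rule sums_unique[symmetric])
  hence s1: "(\<Sum>k. z ^ (k + 3) /\<^sub>R fact (k + 3)) = exp z - (1 + z + z^2/2)"
    by (simp only: eq3)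
  have s2: "exp z - 1 - z - z^2/2 = exp z - (1 + z + z^2/2)" by (simp add: diff_diff_eq)
  have "norm (exp z - 1 - z - z^2/2) = norm (\<Sum>k. z ^ (k + 3) /\<^sub>R fact (k + 3))"
    by (simp only: s1 s2)
  also have "\<dots> \<le> (\<Sum>k. norm (z ^ (k + 3) /\<^sub>R fact (k + 3)))"
    by (rule summable_norm[OF sn])
  also have "\<dots> \<le> norm z ^ 3 * (1 / (1 - norm z) / 6)"
  proof (rule sums_le[OF _ _ sg])
    show "(\<lambda>k. norm (z ^ (k + 3) /\<^sub>R fact (k + 3))) sums (\<Sum>k. norm (z ^ (k + 3) /\<^sub>R fact (k + 3)))"
      using sn by blast
    fix k :: nat
    have f: "(6::real) \<le> fact (k+3)"
    proof -
      have "fact 3 \<le> (fact (k+3) :: real)" by (intro fact_mono) auto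
      thus ?thesis by (simp add: eval_nat_numeral)
    qed
    have "norm (z ^ (k + 3) /\<^sub>R fact (k + 3)) = norm z ^ 3 * (norm z ^ k / fact (k+3))"
      by (simp add: norm_power power_add mult_ac norm_mult divide_inverse)
    also have "\<dots> \<le> norm z ^ 3 * (norm z ^ k / 6)"
      by (intro mult_left_mono divide_left_mono f) auto
    finally show "norm (z ^ (k + 3) /\<^sub>R fact (k + 3)) \<le> norm z ^ 3 * (norm z ^ k / 6)" .
  qed
  also have "\<dots> \<le> norm z ^ 3 * (2 / 6)"
  proof -
    have "1 / (1 - norm z) \<le> 2" using assms by (simp add: divide_simps)
    hence h: "1 / (1 - norm z) / 6 \<le> 2 / 6" by (rule divide_right_mono) auto
    show ?thesis by (rule mult_left_mono[OF h]) simp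
  qed
  finally show ?thesis by simp
qed

lemma h_bound:
  fixes v :: complex
  assumes "Re v > 0"
  shows "norm (1/(exp v - 1) - 1/v) \<le> 2 / Re v"
proof -
  have "Re v \<le> exp (Re v) - 1" using exp_ge_add_one_self[of "Re v"] by linarith
  also have "exp (Re v) - 1 \<le> norm (exp v - 1)"
    using norm_triangle_ineq2[of "exp v" 1] by simp
  finally have a: "Re v \<le> norm (exp v - 1)" .
  have b: "Re v \<le> norm v" using complex_Re_le_cmod .
  have "norm (1/(exp v - 1) - 1/v) \<le> norm (1/(exp v - 1)) + norm (1/v)"
    by (rule norm_triangle_ineq4)
  also have "\<dots> \<le> 1 / Re v + 1 / Re v"
  proof (intro add_mono)
    have "0 < norm (exp v - 1)" "0 < norm v" using a b assms by linarith+
    thus "norm (1/(exp v - 1)) \<le> 1 / Re v" "norm (1/v) \<le> 1 / Re v"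
      using a b assms by (auto simp: norm_divide intro!: divide_left_mono)
  qed
  finally show ?thesis by simp
qed

lemma h_small:
  fixes v :: complex
  assumes "Re v > 0" "norm v \<le> 1/2"
  shows "norm (1/(exp v - 1) - 1/v + 1/2) \<le> norm v"
proof -
  define E where "E = exp v - 1 - v - v^2/2"
  define D where "D = exp v - 1"
  have nv: "norm v > 0" using assms(1) by (metis complex_Re_le_cmod less_le_trans)
  hence v0: "v \<noteq> 0" by auto
  have En: "norm E \<le> norm v ^ 3 / 3" unfolding E_def by (rule exp_cubic[OF assms(2)])
  have Deq: "D = v + v^2/2 + E" unfolding D_def E_def by simp
  have "norm v - norm (v^2/2 + E) \<le> norm D"
  proof -
    have "norm v = norm (D - (v^2/2+E))" by (simp add: Deq)
    also have "\<dots> \<le> norm D + norm (v^2/2+E)" by (rule norm_triangle_ineq4)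
    finally show ?thesis by simp
  qed
  moreover have "norm (v^2/2 + E) \<le> norm v ^2 / 2 + norm v ^ 3 / 3"
    using norm_triangle_ineq[of "v^2/2" E] En by (simp add: norm_power norm_divide)
  moreover have "norm v ^2 / 2 + norm v ^ 3 / 3 \<le> norm v / 3"
  proof -
    have "norm v ^ 2 \<le> norm v * (1/2)" using assms(2) nv by (simp add: power2_eq_square)
    moreover have "norm v ^ 3 \<le> norm v * (1/4)"
    proof -
      have "norm v ^ 3 = norm v * norm v ^ 2" by (simp add: power3_eq_cube power2_eq_square)
      also have "norm v ^ 2 \<le> (1/2)^2" using assms(2) nv by (intro power_mono) auto
      hence "norm v ^ 2 \<le> 1/4" by (simp add: power2_eq_square)
      then have "norm v * norm v ^ 2 \<le> norm v * (1/4)" using nv by (intro mult_left_mono) auto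
      finally show ?thesis .
    qed
    ultimately show ?thesis by linarith
  qed
  ultimately have Dn: "norm D \<ge> 2/3 * norm v" by linarith
  hence D0: "D \<noteq> 0" using nv by auto
  have key: "1/D - 1/v + 1/2 = (v ^ 3 / 2 + v * E - 2 * E) / (2 * v * D)"
  proof -
    have Eeq: "E = D - v - v^2/2" by (simp add: E_def D_def)
    show ?thesis using v0 D0 unfolding Eeq by (simp add: field_simps power2_eq_square power3_eq_cube)
  qed
  have num: "norm (v ^ 3 / 2 + v * E - 2 * E) \<le> 4/3 * norm v ^ 3"
  proof -
    have "norm (v ^ 3 / 2 + v * E - 2 * E) \<le> 2 * norm E + norm v ^ 3 / 2 + norm v * norm E"
    proof -
      have "norm (v ^ 3 / 2 + v * E - 2 * E) \<le> norm (v ^ 3 / 2 + v * E) + norm (2 * E)"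
        by (rule norm_triangle_ineq4)
      also have "norm (v ^ 3 / 2 + v * E) \<le> norm (v ^ 3 / 2) + norm (v * E)"
        by (rule norm_triangle_ineq)
      finally show ?thesis by (simp add: norm_mult norm_power norm_divide)
    qed
    also have "\<dots> \<le> 2 * (norm v ^ 3 / 3) + norm v ^ 3 / 2 + (1/2) * (norm v ^ 3 / 3)"
      using En assms(2) by (intro add_mono mult_mono) auto
    finally show ?thesis by simp
  qed
  have den: "norm (2 * v * D) \<ge> 4/3 * norm v ^ 2"
    using Dn nv by (simp add: norm_mult power2_eq_square)
  have "norm (1/D - 1/v + 1/2) = norm (v ^ 3 / 2 + v * E - 2 * E) / norm (2 * v * D)"
    by (simp add: key norm_divide)
  also have "\<dots> \<le> (4/3 * norm v ^ 3) / (4/3 * norm v ^ 2)"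
    using num den nv by (intro frac_le) auto
  also have "\<dots> = norm v" using nv by (simp add: power2_eq_square power3_eq_cube)
  finally show ?thesis unfolding D_def .
qed




lemma h_lin:
  fixes v :: complex and s :: real
  assumes "Re v > 0" "s > 0" "s * norm v \<le> Re v"
  shows "norm (1/(exp v - 1) - 1/v + 1/2) \<le> (8/s + 1) * norm v"
proof (cases "norm v \<le> 1/2")
  case True
  have "norm (1/(exp v - 1) - 1/v + 1/2) \<le> norm v" by (rule h_small[OF assms(1) True])
  also have "\<dots> \<le> (8/s + 1) * norm v" using assms(2) by (simp add: algebra_simps)
  finally show ?thesis .
next
  case False
  hence nv: "norm v > 1/2" by simp
  have "norm (1/(exp v - 1) - 1/v + 1/2) \<le> norm (1/(exp v - 1) - 1/v) + norm (1/2::complex)"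
    by (rule norm_triangle_ineq)
  also have "\<dots> \<le> 2 / Re v + 1/2" using h_bound[OF assms(1)] by simp
  also have "2 / Re v \<le> 2 / (s * norm v)"
    using assms nv by (intro divide_left_mono mult_pos_pos) auto
  also have "2 / (s * norm v) \<le> 8 / s * norm v"
  proof -
    have "1/2 * (1/2) \<le> norm v * norm v" using nv by (intro mult_mono) auto
    hence "1 \<le> 4 * (norm v * norm v)" by simp
    hence "2 \<le> (8 * norm v) * norm v" by linarith
    moreover have p: "0 < norm v" using nv by linarith
    ultimately have a: "2 / norm v \<le> 8 * norm v" by (intro pos_divide_le_eq[OF p, THEN iffD2])
    have "2 / (s * norm v) = (1/s) * (2 / norm v)" by simp
    also have "\<dots> \<le> (1/s) * (8 * norm v)" using a assms(2) by (intro mult_left_mono) auto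
    finally show ?thesis by simp
  qed
  finally show ?thesis using nv by (simp add: algebra_simps)
qed




lemma term_bound:
  fixes z :: complex and \<delta> C :: real and N j :: nat
  assumes d: "\<delta> > 0" and c: "C > 0" and N: "N \<ge> 1" and j: "j \<ge> 1"
    and rz: "Re z \<le> - \<delta>" and nz: "cmod z \<le> C"
  shows "Re ((1 - exp (of_nat j * z)) * (1/(exp (- (of_nat j * z / of_nat N)) - 1) - 1/(- (of_nat j * z / of_nat N))) / of_nat j)
     \<le> (8*(8*C/\<delta>+1)*C + 16/\<delta>) * real N / ((real j + real N - 1) * (real j + real N))"
proof -
  define v where "v = - (of_nat j * z / of_nat N)"
  define w where "w = exp (of_nat j * z)"
  define h where "h = 1/(exp v - 1) - 1/v"
  define cc where "cc = 8*C/\<delta>+1"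
  define A where "A = 8*cc*C + 16/\<delta>"
  define X where "X = (1 - w) * h"
  have Np: "real N > 0" using N by simp
  have jp: "real j > 0" using j by simp
  have Rev: "Re v = real j * (- Re z) / real N" by (simp add: v_def)
  have Rev2: "real j * \<delta> / real N \<le> Re v" unfolding Rev
    using rz jp Np by (intro divide_right_mono mult_left_mono) auto
  have Rvp: "Re v > 0" using Rev2 d jp Np by (smt (verit) divide_pos_pos mult_pos_pos)
  have nv: "norm v = real j * norm z / real N" by (simp add: v_def norm_mult norm_divide)
  have nv2: "norm v \<le> real j * C / real N" unfolding nv
    using nz jp Np by (intro divide_right_mono mult_left_mono) auto
  have s: "\<delta>/C * norm v \<le> Re v"
  proof -
    have "\<delta>/C * norm v \<le> \<delta>/C * (real j * C / real N)" using nv2 d c by (intro mult_left_mono) auto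
    also have "\<dots> = real j * \<delta> / real N" using c by simp
    finally show ?thesis using Rev2 by linarith
  qed
  have hl: "norm (h + 1/2) \<le> cc * norm v"
    using h_lin[OF Rvp _ s] d c unfolding h_def cc_def by simp
  have hb: "norm h \<le> 2 / Re v" using h_bound[OF Rvp] unfolding h_def .
  have "real j * Re z \<le> 0" using rz d by (intro mult_nonneg_nonpos) auto
  hence nw: "norm w \<le> 1" unfolding w_def by simp
  have n1w: "norm (1 - w) \<le> 2" using norm_triangle_ineq4[of 1 w] nw by simp
  have Rew: "Re w \<le> 1" using complex_Re_le_cmod[of w] nw by linarith
  have "8*C/\<delta> > 0" using d c by simp
  hence cc0: "cc > 0" unfolding cc_def by linarith
  have goal_eq: "Re (X / of_nat j) = Re X / real j" by simp
  show ?thesis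
  proof (cases "j \<le> N")
    case True
    have "Re X = Re ((1 - w) * (-1/2)) + Re ((1 - w) * (h + 1/2))"
      unfolding X_def by (simp add: algebra_simps)
    also have "Re ((1 - w) * (-1/2)) \<le> 0" using Rew by simp
    also have "Re ((1 - w) * (h + 1/2)) \<le> norm ((1 - w) * (h + 1/2))" by (rule complex_Re_le_cmod)
    also have "\<dots> \<le> 2 * (cc * norm v)" unfolding norm_mult
      using n1w hl by (intro mult_mono) auto
    also have "\<dots> \<le> 2 * (cc * (real j * C / real N))"
      using nv2 cc0 by (intro mult_left_mono) auto
    finally have "Re X \<le> real j * (2 * cc * C / real N)" by (simp add: mult_ac)
    hence RX: "Re X / real j \<le> 2 * cc * C / real N" using jp by (simp add: divide_le_eq mult.commute)
    have pr: "(real j + real N - 1) * (real j + real N) \<le> (2 * real N) * (2 * real N)"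
      using True jp Np by (intro mult_mono) auto
    have pp: "(real j + real N - 1) * (real j + real N) > 0" using jp Np j by (intro mult_pos_pos) auto
    have "2 * cc * C / real N = (8 * cc * C) * real N / ((2 * real N) * (2 * real N))"
      using Np by (simp add: field_simps)
    also have "\<dots> \<le> A * real N / ((2 * real N) * (2 * real N))"
      unfolding A_def using d Np by (intro divide_right_mono mult_right_mono) auto
    also have "\<dots> \<le> A * real N / ((real j + real N - 1) * (real j + real N))"
      using pr pp Np d cc0 c unfolding A_def by (intro divide_left_mono mult_nonneg_nonneg) auto
    finally show ?thesis using RX goal_eq
      unfolding X_def h_def v_def w_def A_def cc_def by linarith
  next
    case False
    have "Re X \<le> norm X" by (rule complex_Re_le_cmod)
    also have "\<dots> \<le> 2 * (2 / Re v)" unfolding X_def norm_mult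
      using n1w hb by (intro mult_mono) auto
    also have "\<dots> \<le> 2 * (2 / (real j * \<delta> / real N))"
      using Rev2 d jp Np Rvp by (intro mult_left_mono divide_left_mono) auto
    finally have "Re X \<le> real j * (4 * real N / (\<delta> * real j * real j))" using jp d by (simp add: field_simps)
    hence RX: "Re X / real j \<le> 4 * real N / (\<delta> * real j * real j)" using jp by (simp add: divide_le_eq mult.commute)
    have pr: "(real j + real N - 1) * (real j + real N) \<le> (2 * real j) * (2 * real j)"
      using False jp Np by (intro mult_mono) auto
    have pp: "(real j + real N - 1) * (real j + real N) > 0" using jp Np j by (intro mult_pos_pos) auto
    have "4 * real N / (\<delta> * real j * real j) = (16/\<delta>) * real N / ((2 * real j) * (2 * real j))"
      using jp d by (simp add: field_simps)
    also have "\<dots> \<le> A * real N / ((2 * real j) * (2 * real j))"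
      unfolding A_def using d Np cc0 c by (intro divide_right_mono mult_right_mono) auto
    also have "\<dots> \<le> A * real N / ((real j + real N - 1) * (real j + real N))"
      using pr pp Np d cc0 c unfolding A_def by (intro divide_left_mono mult_nonneg_nonneg) auto
    finally show ?thesis using RX goal_eq
      unfolding X_def h_def v_def w_def A_def cc_def by linarith
  qed
qed




lemma geo1: "(\<Sum>k=1..N. u^k) * (1 - u) = u * (1 - u^N)" for u :: complex
proof (induction N)
  case (Suc N)
  have "(\<Sum>k=1..Suc N. u^k) * (1 - u) = (\<Sum>k=1..N. u^k) * (1 - u) + u^Suc N * (1 - u)"
    by (simp add: algebra_simps)
  also have "\<dots> = u * (1 - u^Suc N)" using Suc.IH by (simp add: algebra_simps)
  finally show ?case .
qed simp

lemma alg_id: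
  fixes u z S :: complex and j N :: nat
  assumes u1: "u \<noteq> 1" and u0: "u \<noteq> 0" and z0: "z \<noteq> 0" and j: "j > 0" and N: "N > 0"
    and S: "S * (1 - u) = u * (1 - u^N)"
  shows "S / of_nat j - of_nat N / z * (u^N / of_nat j ^ 2 - 1 / of_nat j ^ 2)
       = (1 - u^N) * (1/(inverse u - 1) - 1/(- (of_nat j * z / of_nat N))) / of_nat j"
proof -
  have S': "S = u * (1 - u^N) / (1 - u)" using S u1 by (simp add: field_simps)
  have a: "1/(inverse u - 1) = u / (1 - u)" using u0 u1 by (simp add: field_simps)
  have b: "1/(- (of_nat j * z / of_nat N)) = - (of_nat N / (of_nat j * z))" using z0 j N by (simp add: field_simps)
  show ?thesis unfolding a b S' using u1 z0 j N by (simp add: field_simps power2_eq_square)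
qed

lemma tele_b:
  fixes A :: real and N :: nat
  assumes "N \<ge> 1"
  shows "(\<lambda>n. A * real N / ((real (Suc n) + real N - 1) * (real (Suc n) + real N))) sums A"
proof -
  define f where "f n = A * real N / (real n + real N)" for n
  have lim: "f \<longlonglongrightarrow> 0" unfolding f_def by real_asymp
  have "(\<lambda>n. f n - f (Suc n)) sums (f 0 - 0)" by (rule telescope_sums'[OF lim])
  moreover have "f 0 = A" using assms by (simp add: f_def)
  moreover have "f n - f (Suc n) = A * real N / ((real (Suc n) + real N - 1) * (real (Suc n) + real N))" for n
  proof -
    have p1: "real n + real N > 0" "real n + real N + 1 > 0" using assms by auto
    show ?thesis unfolding f_def using p1 by (simp add: field_simps)
  qed
  ultimately show ?thesis by simp
qed




lemma series_bound:
  fixes z :: complex and \<delta> C :: real and N :: nat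
  assumes d: "\<delta> > 0" and c: "C > 0" and N: "N \<ge> 1"
    and rz: "Re z \<le> - \<delta>" and nz: "cmod z \<le> C"
  shows "qpoch (exp (z / of_nat N)) N \<noteq> 0 \<and>
         - ln (cmod (qpoch (exp (z / of_nat N)) N)) - real N * Re (pfun z)
           \<le> 8*(8*C/\<delta>+1)*C + 16/\<delta>"
proof -
  define A where "A = 8*(8*C/\<delta>+1)*C + 16/\<delta>"
  define q where "q = exp (z / of_nat N)"
  have Np: "real N > 0" using N by simp
  have z0: "z \<noteq> 0" using rz d by auto
  have qk: "q ^ k = exp (of_nat k * z / of_nat N)" for k
    unfolding q_def by (simp add: exp_of_nat_mult[symmetric])
  have nqk: "norm (q ^ k) < 1" if "k \<ge> 1" for k
  proof -
    have "real k * Re z < 0" using that rz d by (intro mult_pos_neg) auto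
    hence "real k * Re z / real N < 0" using Np by (simp add: divide_neg_pos)
    thus ?thesis unfolding qk by simp
  qed
  have nz1: "1 - q^k \<noteq> 0" if "k \<ge> 1" for k using nqk[OF that] by auto
  
  have Lk: "(\<lambda>n. (q^k)^(Suc n) / of_nat (Suc n)) sums (- Ln (1 - q^k))" if "k \<ge> 1" for k
  proof -
    have "(\<lambda>n. - ((-(-(q^k)))^n) / of_nat n) sums ln (1 + (-(q^k)))"
      by (rule Ln_series') (use nqk[OF that] in simp)
    hence "(\<lambda>n. - ((q^k)^n / of_nat n)) sums Ln (1 - q^k)" by simp
    hence "(\<lambda>n. (q^k)^n / of_nat n) sums (- Ln (1 - q^k))" using sums_minus by fastforce
    thus ?thesis by (subst sums_Suc_iff) simp
  qed
  define L where "L n = (\<Sum>k=1..N. (q^k)^(Suc n) / of_nat (Suc n))" for n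
  have Ls: "L sums (\<Sum>k=1..N. - Ln (1 - q^k))"
    unfolding L_def by (rule sums_sum) (use Lk in auto)
  
  have ne: "norm (exp z) < 1" using rz d by simp
  have sq: "(\<lambda>n. 1 / (real n + 1)^2) sums (pi^2/6)" using inverse_squares_sums by (simp add: add.commute)
  have sumL2: "(\<lambda>n. exp z ^ Suc n / of_nat (Suc n) ^ 2) sums Li2 (exp z)"
  proof -
    have "summable (\<lambda>n. exp z ^ Suc n / of_nat (Suc n) ^ 2)"
    proof (rule summable_comparison_test')
      show "summable (\<lambda>n. 1 / (real n + 1)^2)" using sq by (rule sums_summable)
      fix n
      have "norm (exp z ^ Suc n) = norm (exp z) ^ Suc n" by (rule norm_power)
      also have "\<dots> \<le> 1" using ne by (intro power_le_one) auto
      finally have "norm (exp z ^ Suc n) \<le> 1" .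
      thus "norm (exp z ^ Suc n / of_nat (Suc n) ^ 2) \<le> 1 / (real n + 1)^2"
      proof -
        have e: "norm (exp z ^ Suc n / of_nat (Suc n) ^ 2) = norm (exp z ^ Suc n) / (real n + 1)^2"
          by (simp only: norm_divide norm_power norm_of_nat) simp
        show ?thesis unfolding e using \<open>norm (exp z ^ Suc n) \<le> 1\<close>
          by (intro divide_right_mono) auto
      qed
    qed
    thus ?thesis unfolding Li2_def by (simp add: summable_sums)
  qed
  have sq': "(\<lambda>n. complex_of_real (1 / (real n + 1)^2)) sums complex_of_real (pi^2/6)"
    by (rule sums_of_real[OF sq])
  define T where "T n = of_nat N / z * (exp z ^ Suc n / of_nat (Suc n) ^ 2 - complex_of_real (1 / (real n + 1)^2))" for n
  have Ts: "T sums (of_nat N * pfun z)"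
  proof -
    have "T sums (of_nat N / z * (Li2 (exp z) - complex_of_real (pi^2/6)))"
      unfolding T_def by (intro sums_mult sums_diff sumL2 sq')
    thus ?thesis by (simp add: pfun_def)
  qed
  have Ds: "(\<lambda>n. Re (L n - T n)) sums Re ((\<Sum>k=1..N. - Ln (1 - q^k)) - of_nat N * pfun z)"
    by (intro sums_Re sums_diff Ls Ts)
  have bnd: "Re (L n - T n) \<le> A * real N / ((real (Suc n) + real N - 1) * (real (Suc n) + real N))" for n
  proof -
    define u where "u = q ^ Suc n"
    have u1: "u \<noteq> 1" and u0: "u \<noteq> 0" using nqk[of "Suc n"] unfolding u_def by (auto simp: q_def)
    have Lu: "L n = (\<Sum>k=1..N. u^k) / of_nat (Suc n)"
    proof -
      have "(q^k)^(Suc n) = (q^Suc n)^k" for k by (metis power_mult mult.commute)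
      thus ?thesis unfolding L_def u_def sum_divide_distrib by simp
    qed
    have uN: "u ^ N = exp (of_nat (Suc n) * z)"
    proof -
      have e1: "(of_nat (Suc n * N) * z / of_nat N :: complex) = of_nat (Suc n) * z"
        using Np by (simp only: of_nat_mult) (simp add: field_simps)
      have "u ^ N = q ^ (Suc n * N)" unfolding u_def by (simp only: power_mult)
      also have "\<dots> = exp (of_nat (Suc n * N) * z / of_nat N)" by (rule qk)
      also have "\<dots> = exp (of_nat (Suc n) * z)" by (simp only: e1)
      finally show ?thesis .
    qed
    have ez: "exp z ^ Suc n = u ^ N" unfolding uN by (rule exp_of_nat_mult[symmetric])
    have Tu: "T n = of_nat N / z * (u^N / of_nat (Suc n) ^ 2 - 1 / of_nat (Suc n) ^ 2)"
      unfolding T_def ez by (simp add: add.commute)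
    have iu: "inverse u = exp (- (of_nat (Suc n) * z / of_nat N))"
      unfolding u_def qk by (simp add: exp_minus)
    have "L n - T n = (1 - u^N) * (1/(inverse u - 1) - 1/(- (of_nat (Suc n) * z / of_nat N))) / of_nat (Suc n)"
      unfolding Lu Tu by (rule alg_id[OF u1 u0 z0]) (use N geo1 in auto)
    also have "\<dots> = (1 - exp (of_nat (Suc n) * z)) * (1/(exp (- (of_nat (Suc n) * z / of_nat N)) - 1)
                  - 1/(- (of_nat (Suc n) * z / of_nat N))) / of_nat (Suc n)"
      unfolding iu uN ..
    finally have eq: "L n - T n = \<dots>" .
    show ?thesis unfolding eq A_def
      by (rule term_bound[OF d c N _ rz nz]) simp
  qed
  have tb: "(\<lambda>n. A * real N / ((real (Suc n) + real N - 1) * (real (Suc n) + real N))) sums A"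
    by (rule tele_b[OF N])
  have main: "Re ((\<Sum>k=1..N. - Ln (1 - q^k)) - of_nat N * pfun z) \<le> A"
    by (rule sums_le[OF bnd Ds tb])
  have P: "qpoch q N = (\<Prod>k=1..N. 1 - q^k)" by (simp add: qpoch_def)
  have P0: "qpoch q N \<noteq> 0" unfolding P using nz1 by (simp add: prod_zero_iff)
  have lnP: "ln (cmod (qpoch q N)) = (\<Sum>k=1..N. ln (cmod (1 - q^k)))"
    unfolding P prod_norm[symmetric] using nz1 by (subst ln_prod) auto
  have reL: "Re (\<Sum>k=1..N. - Ln (1 - q^k)) = - (\<Sum>k=1..N. ln (cmod (1 - q^k)))"
  proof -
    have "Re (\<Sum>k=1..N. - Ln (1 - q^k)) = (\<Sum>k=1..N. - Re (Ln (1 - q^k)))" by (simp add: Re_sum)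
    also have "\<dots> = (\<Sum>k=1..N. - ln (cmod (1 - q^k)))"
      by (rule sum.cong) (use nz1 in auto)
    also have "\<dots> = - (\<Sum>k=1..N. ln (cmod (1 - q^k)))" by (rule sum_negf)
    finally show ?thesis .
  qed
  have "- ln (cmod (qpoch q N)) - real N * Re (pfun z) = Re ((\<Sum>k=1..N. - Ln (1 - q^k)) - of_nat N * pfun z)"
  proof -
    have "Re ((\<Sum>k=1..N. - Ln (1 - q^k)) - of_nat N * pfun z) = Re (\<Sum>k=1..N. - Ln (1 - q^k)) - real N * Re (pfun z)"
      by simp
    thus ?thesis using lnP reL by linarith
  qed
  with main P0 show ?thesis unfolding q_def A_def by simp
qed




lemma qm1_bounds:
  fixes z :: complex and \<delta> C :: real and N :: nat
  assumes d: "\<delta> > 0" and c: "C > 0" and N: "N \<ge> 1"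
    and rz: "Re z \<le> - \<delta>" and nz: "cmod z \<le> C"
  shows "\<delta> / (1 + \<delta>) / real N \<le> cmod (exp (z / of_nat N) - 1)"
    and "cmod (exp (z / of_nat N) - 1) \<le> 6 * C / real N"
proof -
  have Np: "real N > 0" using N by simp
  have "Re z / real N \<le> (- \<delta>) / real N" using rz Np by (intro divide_right_mono) auto
  hence "Re z / real N \<le> - (\<delta> / real N)" by simp
  hence "exp (Re z / real N) \<le> exp (- (\<delta> / real N))" by simp
  also have "\<dots> = 1 / exp (\<delta> / real N)" by (simp add: exp_minus field_simps)
  also have "\<dots> \<le> 1 / (1 + \<delta> / real N)"
  proof -
    have p: "0 < 1 + \<delta> / real N" using d Np by (simp add: add_pos_nonneg)
    show ?thesis using p exp_ge_add_one_self[of "\<delta> / real N"]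
      by (intro divide_left_mono mult_pos_pos) auto
  qed
  also have "\<dots> = real N / (real N + \<delta>)" using Np d by (simp add: field_simps)
  finally have e1: "exp (Re z / real N) \<le> real N / (real N + \<delta>)" .
  have "1 - exp (Re z / real N) \<le> cmod (exp (z / of_nat N) - 1)"
    using norm_triangle_ineq2[of 1 "exp (z / of_nat N)"] by (simp add: norm_minus_commute)
  moreover have "\<delta> / (1 + \<delta>) / real N \<le> 1 - real N / (real N + \<delta>)"
  proof -
    have "1 - real N / (real N + \<delta>) = \<delta> / (real N + \<delta>)" using Np d by (simp add: field_simps)
    moreover have "\<delta> / (1 + \<delta>) / real N = \<delta> / ((1 + \<delta>) * real N)" by simp
    moreover have "\<delta> / ((1 + \<delta>) * real N) \<le> \<delta> / (real N + \<delta>)"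
    proof (rule divide_left_mono)
      have "\<delta> * 1 \<le> \<delta> * real N" using d N by (intro mult_left_mono) auto
      thus "real N + \<delta> \<le> (1 + \<delta>) * real N" by (simp add: algebra_simps)
      show "0 \<le> \<delta>" using d by simp
      show "0 < (1 + \<delta>) * real N * (real N + \<delta>)" using d Np by (intro mult_pos_pos) auto
    qed
    ultimately show ?thesis by simp
  qed
  ultimately show "\<delta> / (1 + \<delta>) / real N \<le> cmod (exp (z / of_nat N) - 1)" using e1 by linarith
  show "cmod (exp (z / of_nat N) - 1) \<le> 6 * C / real N"
  proof (cases "C / real N \<le> 1/2")
    case True
    have nw: "norm (z / of_nat N) \<le> C / real N" using nz Np by (simp add: norm_divide divide_right_mono)
    define w where "w = z / of_nat N"
    have w2: "norm w \<le> 1/2" using nw True unfolding w_def by linarith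
    have "norm (exp w - 1) \<le> norm w + norm (w^2/2) + norm (exp w - 1 - w - w^2/2)"
      by (smt (verit) norm_triangle_ineq diff_add_cancel add.assoc)
    also have "\<dots> \<le> norm w + norm w * (1/2) / 2 + norm w * (1/4) / 3"
    proof -
      have "norm w * norm w \<le> norm w * (1/2)" using w2 by (intro mult_left_mono) auto
      hence "norm w ^ 2 \<le> norm w * (1/2)" by (simp add: power2_eq_square)
      moreover have "norm w ^ 3 \<le> norm w * (1/4)"
      proof -
        have "norm w ^ 2 \<le> (1/2)^2" using w2 by (intro power_mono) auto
        hence "norm w * norm w ^ 2 \<le> norm w * (1/4)" by (intro mult_left_mono) (auto simp: power2_eq_square)
        thus ?thesis by (simp add: power3_eq_cube power2_eq_square)
      qed
      moreover have "norm (exp w - 1 - w - w^2/2) \<le> norm w ^ 3 / 3" by (rule exp_cubic[OF w2])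
      ultimately show ?thesis by (simp add: norm_divide norm_power)
    qed
    also have "\<dots> \<le> 3/2 * norm w" by simp
    finally have "norm (exp (z / of_nat N) - 1) \<le> 3/2 * norm (z / of_nat N)" unfolding w_def .
    also have "\<dots> \<le> 3/2 * (C / real N)" using nw by simp
    also have "\<dots> = (3/2 * C) / real N" by simp
    also have "\<dots> \<le> 6 * C / real N" using c Np by (intro divide_right_mono) auto
    finally show ?thesis .
  next
    case False
    have "Re z / real N < 0" using rz d Np by (simp add: divide_neg_pos)
    hence n1: "norm (exp (z / of_nat N)) \<le> 1" by simp
    have "cmod (exp (z / of_nat N) - 1) \<le> norm (exp (z / of_nat N)) + norm (1::complex)"
      by (rule norm_triangle_ineq4)
    moreover have "exp (Re z / real N) \<le> 1" using \<open>Re z / real N < 0\<close> by simp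
    moreover have "norm (exp (z / of_nat N)) = exp (Re z / real N)" by simp
    moreover have "norm (1::complex) = 1" by simp
    ultimately have "cmod (exp (z / of_nat N) - 1) \<le> 2" by linarith
    also have "2 \<le> 6 * C / real N" using False by simp
    finally show ?thesis .
  qed
qed

lemma powi_bound:
  fixes x a b :: real and e :: int and N :: nat
  assumes a: "a > 0" and b: "b > 0" and N: "N \<ge> 1"
    and xa: "a / real N \<le> x" and xb: "x \<le> b / real N"
  shows "1 / (x powi e) \<le> (a powi (-e) + b powi (-e)) * real N powi e"
proof -
  have Np: "real N > 0" using N by simp
  have xp: "x > 0" using xa a Np by (smt (verit) divide_pos_pos)
  show ?thesis
  proof (cases "e \<ge> 0")
    case True
    then obtain k where k: "e = int k" by (metis nonneg_eq_int)
    have "(a / real N)^k \<le> x^k" using xa a Np by (intro power_mono) auto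
    hence "a^k / real N ^ k \<le> x^k" by (simp add: power_divide)
    hence "1 / x^k \<le> real N ^ k / a^k" using a Np xp by (simp add: field_simps)
    also have "\<dots> = a powi (- int k) * real N ^ k" by (simp add: power_int_minus_divide)
    also have "\<dots> \<le> (a powi (- int k) + b powi (- int k)) * real N ^ k"
      using b by (intro mult_right_mono) auto
    finally show ?thesis unfolding k by simp
  next
    case False
    then obtain k where k: "e = - int k" by (metis nonneg_eq_int neg_0_le_iff_le linorder_linear minus_minus)
    have "x^k \<le> (b / real N)^k" using xb xp by (intro power_mono) auto
    also have "\<dots> = b^k * (1 / real N ^ k)" by (simp add: power_divide)
    also have "\<dots> \<le> (a powi (int k) + b powi (int k)) * (1 / real N ^ k)"
      using a by (intro mult_right_mono) auto
    finally have "x^k \<le> (a powi (int k) + b powi (int k)) * (1 / real N ^ k)" .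
    thus ?thesis unfolding k by (simp add: power_int_minus_divide)
  qed
qed




theorem corollary2p5:
  fixes m :: int and \<delta> C :: real
  assumes "\<delta> > 0" and "C > 0"
  shows "\<exists>K. \<forall>N::nat. \<forall>z::complex. N \<ge> 1 \<longrightarrow> Re z \<le> - \<delta> \<longrightarrow> cmod z \<le> C \<longrightarrow>
           cmod (exp (z / of_nat N) /
                 ((exp (z / of_nat N) - 1) powi (m + 1) * qpoch (exp (z / of_nat N)) N))
           \<le> K * real N powi (m + 1) * exp (real N * Re (pfun z))"
proof -
  define A where "A = 8*(8*C/\<delta>+1)*C + 16/\<delta>"
  define a where "a = \<delta> / (1 + \<delta>)"
  define b where "b = 6 * C"
  define K1 where "K1 = a powi (-(m+1)) + b powi (-(m+1))"
  have a0: "a > 0" unfolding a_def using assms by simp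
  have b0: "b > 0" unfolding b_def using assms by simp
  show ?thesis
  proof (intro exI[of _ "K1 * exp A"] allI impI)
    fix N :: nat and z :: complex
    assume N: "N \<ge> 1" and rz: "Re z \<le> - \<delta>" and cz: "cmod z \<le> C"
    define q where "q = exp (z / of_nat N)"
    define P where "P = qpoch q N"
    define x where "x = cmod (q - 1)"
    have Np: "real N > 0" using N by simp
    have sb: "P \<noteq> 0" "- ln (cmod P) - real N * Re (pfun z) \<le> A"
      using series_bound[OF assms N rz cz] unfolding P_def q_def A_def by auto
    have xa: "a / real N \<le> x" and xb: "x \<le> b / real N"
      using qm1_bounds[OF assms N rz cz] unfolding x_def q_def a_def b_def by auto
    have xp: "x > 0" using xa a0 Np by (smt (verit) divide_pos_pos)
    have i1: "1 / (x powi (m+1)) \<le> K1 * real N powi (m+1)"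
      unfolding K1_def by (rule powi_bound[OF a0 b0 N xa xb])
    have Pp: "cmod P > 0" using sb(1) by simp
    have i2: "1 / cmod P \<le> exp A * exp (real N * Re (pfun z))"
    proof -
      have "1 / cmod P = exp (- ln (cmod P))" using Pp by (simp add: exp_minus divide_inverse)
      also have "\<dots> \<le> exp (A + real N * Re (pfun z))" using sb(2) by simp
      also have "\<dots> = exp A * exp (real N * Re (pfun z))" by (rule exp_add)
      finally show ?thesis .
    qed
    have nq: "cmod q \<le> 1"
    proof -
      have "Re z / real N \<le> 0" using rz assms Np by (simp add: divide_nonpos_pos)
      thus ?thesis unfolding q_def by simp
    qed
    have xpp: "x powi (m+1) > 0" using xp by simp
    have "cmod (q / ((q - 1) powi (m + 1) * P)) = cmod q / (x powi (m+1) * cmod P)"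
      unfolding x_def by (simp add: norm_divide norm_mult norm_power_int)
    also have "\<dots> \<le> 1 / (x powi (m+1) * cmod P)"
      using nq xpp Pp by (intro divide_right_mono) auto
    also have "\<dots> = (1 / x powi (m+1)) * (1 / cmod P)" by simp
    also have "\<dots> \<le> (K1 * real N powi (m+1)) * (exp A * exp (real N * Re (pfun z)))"
    proof -
      have "0 < 1 / x powi (m+1)" using xpp by simp
      hence "0 \<le> K1 * real N powi (m+1)" using i1 by linarith
      thus ?thesis using i1 i2 xpp Pp by (intro mult_mono) auto
    qed
    also have "\<dots> = K1 * exp A * real N powi (m + 1) * exp (real N * Re (pfun z))" by simp
    finally show "cmod (exp (z / of_nat N) /
                 ((exp (z / of_nat N) - 1) powi (m + 1) * qpoch (exp (z / of_nat N)) N))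
           \<le> K1 * exp A * real N powi (m + 1) * exp (real N * Re (pfun z))"
      unfolding q_def P_def .
  qed
qed


end
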